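(* (a) For $n\ge 2$ and $1\le d\le n$, in $B_n$: $$[1,n]^d=[d,1]\,[1,n]\,[1,n-1]^{d-1}\quad\text{and}\quad [n,1]^d=[n-1,1]^{d-1}\,[n,1]\,[1,d].$$ (b) Let $1\le\rho\le m$, $x\ge 0$, $m+x\ge 2$, and $\gamma\in B_m$, where $B_m\subseteq B_{m+x}$ via the standard inclusion. Then $$\widehat{\gamma[1,m+x]^{\rho}}=\widehat{\gamma[\rho,1]^x[1,m]^{\rho}}\quad\text{and}\quad\widehat{\gamma[m+x,1]^{\rho}}=\widehat{\gamma[m,1]^{\rho}[1,\rho]^x},$$ where the left sides are closures in $B_{m+x}$ and the right sides are closures in $B_m$. (c) For T-links: $T((m,y),(n,\rho))=\widehat{[\rho,1]^{n-m}[1,m]^{\rho+y}}$ for $2\le\rho\le m\le n$ and $1\le y$; $T((2,y),(n,\rho))=T((2,y),(\rho,n))$ for $2\le\rho,n$ and $1\le y$; $T((m,y),(n,m))=T(m,n+y)$ for $2\le m<n$ with $n\equiv 0\pmod m$ (and $y\ge 1$).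
   Context: $B_n$ is the braid group on $n$ strands with standard generators $\sigma_1,\dots,\sigma_{n-1}$; $\widehat\beta$ denotes the closure. For $a<b$, $[a,b]=\sigma_a\sigma_{a+1}\cdots\sigma_{b-1}$; for $a>b$, $[a,b]=\sigma_{a-1}\sigma_{a-2}\cdots\sigma_b$; $[a,a]=1$. A T-link $T((r_1,s_1),\dots,(r_k,s_k))$, with integers $2\le r_1\le\dots\le r_k$ and $s_i>0$, is the closure of $[1,r_1]^{s_1}\cdots[1,r_k]^{s_k}\in B_{r_k}$; the torus link $T(m,n)$ is $T((m,n))$, the closure of $[1,m]^n\in B_m$. *)

theory Defs
  imports Main
begin

text \<open>Braid words: a letter k > 0 stands for sigma_k, a letter k < 0 for the
inverse of sigma_(-k).  A word lies in B_n iff all letters are nonzero with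
absolute value below n.\<close>

type_synonym bword = "int list"

definition valid_word :: "nat \<Rightarrow> bword \<Rightarrow> bool" where
  "valid_word n w \<longleftrightarrow> (\<forall>k\<in>set w. k \<noteq> 0 \<and> \<bar>k\<bar> < int n)"

definition binv :: "bword \<Rightarrow> bword" where
  "binv w = rev (map uminus w)"

inductive braid_eq :: "nat \<Rightarrow> bword \<Rightarrow> bword \<Rightarrow> bool" for n where
  refl: "valid_word n w \<Longrightarrow> braid_eq n w w"
| sym: "braid_eq n u v \<Longrightarrow> braid_eq n v u"
| trans: "braid_eq n u v \<Longrightarrow> braid_eq n v w \<Longrightarrow> braid_eq n u w"
| cancel1: "valid_word n u \<Longrightarrow> valid_word n v \<Longrightarrow> 1 \<le> i \<Longrightarrow> i < int n \<Longrightarrow>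
      braid_eq n (u @ [i, -i] @ v) (u @ v)"
| cancel2: "valid_word n u \<Longrightarrow> valid_word n v \<Longrightarrow> 1 \<le> i \<Longrightarrow> i < int n \<Longrightarrow>
      braid_eq n (u @ [-i, i] @ v) (u @ v)"
| far_comm: "valid_word n u \<Longrightarrow> valid_word n v \<Longrightarrow> 1 \<le> i \<Longrightarrow> i + 1 < j \<Longrightarrow> j < int n \<Longrightarrow>
      braid_eq n (u @ [i, j] @ v) (u @ [j, i] @ v)"
| braid_rel: "valid_word n u \<Longrightarrow> valid_word n v \<Longrightarrow> 1 \<le> i \<Longrightarrow> i + 1 < int n \<Longrightarrow>
      braid_eq n (u @ [i, i + 1, i] @ v) (u @ [i + 1, i, i + 1] @ v)"

text \<open>Equality of closures of braids (as oriented links up to isotopy),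
expressed combinatorially by Markov's theorem: the equivalence relation on
pairs (number of strands, braid word) generated by braid equality,
conjugation, and (de)stabilization.\<close>

inductive markov_eq :: "nat \<Rightarrow> bword \<Rightarrow> nat \<Rightarrow> bword \<Rightarrow> bool" where
  braid: "1 \<le> n \<Longrightarrow> braid_eq n a b \<Longrightarrow> markov_eq n a n b"
| conj: "1 \<le> n \<Longrightarrow> valid_word n a \<Longrightarrow> valid_word n g \<Longrightarrow>
      markov_eq n (g @ a @ binv g) n a"
| stab_pos: "1 \<le> n \<Longrightarrow> valid_word n a \<Longrightarrow> markov_eq n a (Suc n) (a @ [int n])"
| stab_neg: "1 \<le> n \<Longrightarrow> valid_word n a \<Longrightarrow> markov_eq n a (Suc n) (a @ [- int n])"
| sym: "markov_eq n a m b \<Longrightarrow> markov_eq m b n a"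
| trans: "markov_eq n a m b \<Longrightarrow> markov_eq m b k c \<Longrightarrow> markov_eq n a k c"

definition closure :: "nat \<Rightarrow> bword \<Rightarrow> (nat \<times> bword) set" where
  "closure n w = {(m, v). markov_eq n w m v}"

text \<open>[a,b] = sigma_a ... sigma_(b-1) if a < b, sigma_(a-1) ... sigma_b if a > b,
and the empty word if a = b.\<close>

definition ival :: "nat \<Rightarrow> nat \<Rightarrow> bword" where
  "ival a b = (if a < b then map int [a..<b] else rev (map int [b..<a]))"

definition wpow :: "bword \<Rightarrow> nat \<Rightarrow> bword" where
  "wpow w d = concat (replicate d w)"

definition T_link :: "(nat \<times> nat) list \<Rightarrow> (nat \<times> bword) set" where
  "T_link rs = closure (fst (last rs)) (concat (map (\<lambda>(r, s). wpow (ival 1 r) s) rs))"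

definition torus_link :: "nat \<Rightarrow> nat \<Rightarrow> (nat \<times> bword) set" where
  "torus_link m n = T_link [(m, n)]"

end

theory Submission
  imports Defs
begin


lemma valid_append[simp]: "valid_word n (u @ v) \<longleftrightarrow> valid_word n u \<and> valid_word n v"
  by (auto simp: valid_word_def)
lemma valid_Cons[simp]: "valid_word n (k # u) \<longleftrightarrow> k \<noteq> 0 \<and> \<bar>k\<bar> < int n \<and> valid_word n u"
  by (auto simp: valid_word_def)
lemma valid_Nil[simp]: "valid_word n []"
  by (auto simp: valid_word_def)
lemma valid_rev[simp]: "valid_word n (rev u) = valid_word n u"
  by (auto simp: valid_word_def)
lemma valid_binv[simp]: "valid_word n (binv u) = valid_word n u"
  by (auto simp: valid_word_def binv_def)
lemma valid_mono: "valid_word n u \<Longrightarrow> n \<le> n' \<Longrightarrow> valid_word n' u"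
  by (force simp: valid_word_def)

lemma wpow_0[simp]: "wpow w 0 = []" by (simp add: wpow_def)
lemma wpow_Suc: "wpow w (Suc d) = w @ wpow w d" by (simp add: wpow_def)
lemma wpow_add: "wpow w (a + b) = wpow w a @ wpow w b" by (simp add: wpow_def replicate_add)
lemma wpow_Suc': "wpow w (Suc d) = wpow w d @ w"
  using wpow_add[of w d 1] by (simp add: wpow_def)
lemma wpow_mult: "wpow w (a * b) = wpow (wpow w a) b"
  by (induction b) (simp_all add: wpow_add wpow_Suc)
lemma rev_wpow: "rev (wpow w d) = wpow (rev w) d"
  by (induction d) (simp_all add: wpow_Suc, metis wpow_Suc wpow_Suc')
lemma map_wpow: "map f (wpow w d) = wpow (map f w) d"
  by (induction d) (simp_all add: wpow_Suc)
lemma set_wpow: "set (wpow w d) \<subseteq> set w"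
  by (induction d) (auto simp add: wpow_Suc)
lemma valid_wpow: "valid_word n w \<Longrightarrow> valid_word n (wpow w d)"
  using set_wpow[of w d] by (auto simp: valid_word_def)
lemma wpow_comm: "wpow w a @ wpow w b = wpow w b @ wpow w a"
  by (metis add.commute wpow_add)

lemma set_ival: "k \<in> set (ival a b) \<Longrightarrow> int (min a b) \<le> k \<and> k < int (max a b)"
  by (auto simp: ival_def split: if_splits)
lemma ival_same[simp]: "ival a a = []" by (simp add: ival_def)
lemma valid_ival: assumes "1 \<le> a" "1 \<le> b" "a \<le> n" "b \<le> n" shows "valid_word n (ival a b)"
  unfolding valid_word_def
proof
  fix k assume "k \<in> set (ival a b)"
  then have "int (min a b) \<le> k \<and> k < int (max a b)" by (rule set_ival)
  then show "k \<noteq> 0 \<and> \<bar>k\<bar> < int n"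
    by (cases "a \<le> b") (use assms in \<open>auto simp: min_def max_def\<close>)
qed
lemma rev_ival: "rev (ival a b) = ival b a"
  by (auto simp: ival_def)
lemma ival_1_Suc: "1 \<le> N \<Longrightarrow> ival 1 (Suc N) = ival 1 N @ [int N]"
  by (auto simp: ival_def)
lemma ival_Suc_1: "1 \<le> N \<Longrightarrow> ival (Suc N) 1 = int N # ival N 1"
  using ival_1_Suc[of N] rev_ival by (metis rev.simps(2) rev_rev_ident rev_singleton_conv rev_append append_Cons append_Nil)
lemma ival_1_Cons: "2 \<le> n \<Longrightarrow> ival 1 n = 1 # ival 2 n"
  by (simp add: ival_def upt_conv_Cons numeral_2_eq_2 numeral_3_eq_3)
lemma ival_Suc_2: "1 \<le> d \<Longrightarrow> ival (Suc d) 2 @ [1] = ival (Suc d) 1"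
  by (cases "d = 1") (simp_all add: ival_def upt_conv_Cons numeral_2_eq_2)
lemma map_ival_plus: "map (\<lambda>k. k + 1) (ival a b) = ival (Suc a) (Suc b)"
proof -
  have h: "map ((\<lambda>k. k+1) \<circ> int) xs = map int (map Suc xs)" for xs by simp
  show ?thesis unfolding ival_def by (auto simp del: upt_Suc simp: h rev_map[symmetric] map_Suc_upt)
qed
lemma map_ival_flip: "map (\<lambda>k. int n - k) (ival 1 n) = ival n 1"
  by (auto simp: ival_def intro!: nth_equalityI simp: rev_nth)

lemma braid_eq_valid: "braid_eq n u v \<Longrightarrow> valid_word n u \<and> valid_word n v"
  by (induction rule: braid_eq.induct) auto

lemma braid_eq_ctx: "braid_eq n u v \<Longrightarrow> valid_word n a \<Longrightarrow> valid_word n b \<Longrightarrow>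
    braid_eq n (a @ u @ b) (a @ v @ b)"
proof (induction rule: braid_eq.induct)
  case (refl w) then show ?case by (simp add: braid_eq.refl)
next
  case (sym u v) then show ?case by (blast intro: braid_eq.sym)
next
  case (trans u v w) then show ?case by (blast intro: braid_eq.trans)
next
  case (cancel1 u v i) then show ?case using braid_eq.cancel1[of n "a@u" "v@b" i] by simp
next
  case (cancel2 u v i) then show ?case using braid_eq.cancel2[of n "a@u" "v@b" i] by simp
next
  case (far_comm u v i j) then show ?case using braid_eq.far_comm[of n "a@u" "v@b" i j] by simp
next
  case (braid_rel u v i) then show ?case using braid_eq.braid_rel[of n "a@u" "v@b" i] by simp
qed

lemma braid_eq_left: "braid_eq n u v \<Longrightarrow> valid_word n a \<Longrightarrow> braid_eq n (a @ u) (a @ v)"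
  using braid_eq_ctx[of n u v a "[]"] by simp
lemma braid_eq_right: "braid_eq n u v \<Longrightarrow> valid_word n b \<Longrightarrow> braid_eq n (u @ b) (v @ b)"
  using braid_eq_ctx[of n u v "[]" b] by simp
lemma braid_eq_app: "braid_eq n u u' \<Longrightarrow> braid_eq n v v' \<Longrightarrow> braid_eq n (u @ v) (u' @ v')"
  by (meson braid_eq.trans braid_eq_left braid_eq_right braid_eq_valid)

lemma braid_eq_mono: "braid_eq n u v \<Longrightarrow> n \<le> n' \<Longrightarrow> braid_eq n' u v"
proof (induction rule: braid_eq.induct)
  case (refl w) then show ?case by (simp add: braid_eq.refl valid_mono)
next
  case (sym u v) then show ?case by (blast intro: braid_eq.sym)
next
  case (trans u v w) then show ?case by (blast intro: braid_eq.trans)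
next
  case (cancel1 u v i) then show ?case by (intro braid_eq.cancel1) (auto intro: valid_mono)
next
  case (cancel2 u v i) then show ?case by (intro braid_eq.cancel2) (auto intro: valid_mono)
next
  case (far_comm u v i j) then show ?case by (intro braid_eq.far_comm) (auto intro: valid_mono)
next
  case (braid_rel u v i) then show ?case by (intro braid_eq.braid_rel) (auto intro: valid_mono)
qed

lemma braid_eq_rev: "braid_eq n u v \<Longrightarrow> braid_eq n (rev u) (rev v)"
proof (induction rule: braid_eq.induct)
  case (refl w) then show ?case by (simp add: braid_eq.refl)
next
  case (sym u v) then show ?case by (blast intro: braid_eq.sym)
next
  case (trans u v w) then show ?case by (blast intro: braid_eq.trans)
next
  case (cancel1 u v i) then show ?case using braid_eq.cancel2[of n "rev v" "rev u" i] by simp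
next
  case (cancel2 u v i) then show ?case using braid_eq.cancel1[of n "rev v" "rev u" i] by simp
next
  case (far_comm u v i j) then show ?case using braid_eq.far_comm[of n "rev v" "rev u" i j]
    by (simp add: braid_eq.sym)
next
  case (braid_rel u v i) then show ?case using braid_eq.braid_rel[of n "rev v" "rev u" i] by simp
qed

lemma braid_eq_cancel_inv: "valid_word n a \<Longrightarrow> valid_word n w \<Longrightarrow> valid_word n b \<Longrightarrow>
   braid_eq n (a @ w @ binv w @ b) (a @ b)"
proof (induction w arbitrary: a b)
  case Nil then show ?case by (simp add: braid_eq.refl binv_def)
next
  case (Cons c w)
  have bi: "binv (c # w) = binv w @ [-c]" by (simp add: binv_def)
  have 1: "braid_eq n ((a @ [c]) @ w @ binv w @ ([-c] @ b)) ((a @ [c]) @ ([-c] @ b))"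
    using Cons by (intro Cons.IH) auto
  have 2: "braid_eq n (a @ [c, -c] @ b) (a @ b)"
  proof (cases "c > 0")
    case True then show ?thesis using Cons braid_eq.cancel1[of n a b c] by auto
  next
    case False then show ?thesis using Cons braid_eq.cancel2[of n a b "-c"] by auto
  qed
  show ?case using braid_eq.trans[OF 1] 2 bi by simp
qed

lemmas [trans] = braid_eq.trans



lemma far_word:
  assumes "1 \<le> j" "j < int n" "\<forall>k\<in>set w. 1 \<le> k \<and> k < int n \<and> (k + 1 < j \<or> j + 1 < k)"
  shows "braid_eq n ([j] @ w) (w @ [j])"
  using assms(3)
proof (induction w)
  case Nil then show ?case using assms by (simp add: braid_eq.refl)
next
  case (Cons k w)
  have 1: "braid_eq n ([j, k] @ w) ([k, j] @ w)"
  proof (cases "j + 1 < k")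
    case True
    have "braid_eq n ([] @ [j, k] @ w) ([] @ [k, j] @ w)"
      by (rule braid_eq.far_comm) (use Cons assms True in \<open>auto simp: valid_word_def\<close>)
    then show ?thesis by simp
  next
    case False
    have "braid_eq n ([] @ [k, j] @ w) ([] @ [j, k] @ w)"
      by (rule braid_eq.far_comm) (use Cons assms False in \<open>auto simp: valid_word_def\<close>)
    then show ?thesis by (simp add: braid_eq.sym)
  qed
  have 2: "braid_eq n ([k] @ ([j] @ w)) ([k] @ (w @ [j]))"
    using Cons by (intro braid_eq_left) auto
  show ?case using braid_eq.trans[OF 1] 2 by simp
qed

lemma L1:
  assumes "1 \<le> i" "i + 2 \<le> n"
  shows "braid_eq n (ival 1 n @ [int i]) ((int i + 1) # ival 1 n)"
proof -
  define P where "P = map int [1..<i]"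
  define R where "R = map int [i+2..<n]"
  have dec: "ival 1 n = P @ [int i, int i + 1] @ R"
  proof -
    have "[1..<n] = [1..<i] @ [i..<n]" using assms upt_add_eq_append[of 1 i "n - i"] by simp
    moreover have "[i..<n] = i # Suc i # [i+2..<n]" using assms by (simp add: upt_conv_Cons)
    ultimately show ?thesis using assms by (simp add: ival_def P_def R_def)
  qed
  have vP: "valid_word n P" using assms by (auto simp: P_def valid_word_def)
  have vR: "valid_word n R" by (auto simp: R_def valid_word_def)
  have s1: "braid_eq n ([int i] @ R) (R @ [int i])"
    using assms by (intro far_word) (auto simp: R_def)
  have s2: "braid_eq n ([int i + 1] @ P) (P @ [int i + 1])"
    using assms by (intro far_word) (auto simp: P_def)
  have "braid_eq n (ival 1 n @ [int i]) ((P @ [int i, int i + 1]) @ ([int i] @ R))"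
    using dec braid_eq_left[OF braid_eq.sym[OF s1], of "P @ [int i, int i + 1]"] assms vP
    by simp
  also have "braid_eq n ((P @ [int i, int i + 1]) @ ([int i] @ R)) (P @ [int i + 1, int i, int i + 1] @ R)"
    using braid_eq.braid_rel[of n P R "int i"] assms vP vR by simp
  also have "braid_eq n (P @ [int i + 1, int i, int i + 1] @ R) (([int i + 1] @ P) @ ([int i, int i + 1] @ R))"
    using braid_eq_right[OF braid_eq.sym[OF s2], of "[int i, int i + 1] @ R"] assms vR by simp
  finally show ?thesis using dec by simp
qed



lemma move_word:
  assumes "valid_word n g" "\<And>k. k \<in> set w \<Longrightarrow> braid_eq n (g @ [k]) ([f k] @ g)"
  shows "braid_eq n (g @ w) (map f w @ g)"
  using assms(2)
proof (induction w)
  case Nil then show ?case using assms by (simp add: braid_eq.refl)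
next
  case (Cons k w)
  have hk: "braid_eq n (g @ [k]) ([f k] @ g)" using Cons by simp
  have vw: "valid_word n w"
    using Cons.prems braid_eq_valid by (fastforce simp: valid_word_def)
  have vf: "valid_word n [f k]" using braid_eq_valid[OF hk] by simp
  have "braid_eq n (g @ [k] @ w) ([f k] @ g @ w)" using braid_eq_right[OF hk vw] by simp
  also have "braid_eq n ([f k] @ (g @ w)) ([f k] @ (map f w @ g))"
    using Cons by (intro braid_eq_left[OF _ vf]) auto
  finally show ?case by simp
qed

lemma shift_word:
  assumes "2 \<le> n" "\<forall>k\<in>set w. 1 \<le> k \<and> k + 2 \<le> int n"
  shows "braid_eq n (ival 1 n @ w) (map (\<lambda>k. k + 1) w @ ival 1 n)"
proof (rule move_word)
  show "valid_word n (ival 1 n)" using assms by (intro valid_ival) auto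
  fix k assume "k \<in> set w"
  then have "1 \<le> nat k" "nat k + 2 \<le> n" "k = int (nat k)" using assms by auto
  then show "braid_eq n (ival 1 n @ [k]) ([k + 1] @ ival 1 n)"
    using L1[of "nat k" n] by simp
qed

lemma sq:
  assumes "2 \<le> n"
  shows "braid_eq n (ival 1 n @ ival 1 n) ([1] @ ival 1 n @ ival 1 (n - 1))"
proof -
  have h1: "braid_eq n (ival 1 n @ ival 1 (n - 1)) (map (\<lambda>k. k + 1) (ival 1 (n - 1)) @ ival 1 n)"
    by (intro shift_word) (use assms in \<open>auto dest!: set_ival\<close>)
  have h2: "map (\<lambda>k. k + 1) (ival 1 (n - 1)) = ival 2 n"
    using assms map_ival_plus[of 1 "n - 1"] by (simp add: numeral_2_eq_2)
  have "braid_eq n ([1] @ ival 1 n @ ival 1 (n - 1)) ([1] @ ival 2 n @ ival 1 n)"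
    using braid_eq_left[OF h1[unfolded h2], of "[1]"] assms by auto
  then show ?thesis using ival_1_Cons[OF assms] by (simp add: braid_eq.sym)
qed

lemma a1:
  assumes "2 \<le> n"
  shows "Suc k \<le> n \<Longrightarrow> braid_eq n (wpow (ival 1 n) (Suc k)) (ival (Suc k) 1 @ ival 1 n @ wpow (ival 1 (n-1)) k)"
proof (induction k)
  case 0
  have "braid_eq n (ival 1 n) (ival 1 n)" using assms by (intro braid_eq.refl valid_ival) auto
  then show ?case by (simp add: wpow_Suc)
next
  case (Suc k)
  define X where "X = ival 1 n"
  define Y where "Y = ival 1 (n - 1)"
  have vX: "valid_word n X" using assms by (simp add: X_def valid_ival)
  have vY: "valid_word n Y" using assms by (simp add: Y_def valid_ival)
  have vW: "valid_word n (wpow Y k)" using vY by (rule valid_wpow)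
  have v2: "valid_word n (ival (Suc (Suc k)) 2)" using Suc assms by (intro valid_ival) auto
  have "braid_eq n (X @ wpow X (Suc k)) (X @ (ival (Suc k) 1 @ X @ wpow Y k))"
    using Suc vX by (intro braid_eq_left) (auto simp: X_def Y_def)
  also have "braid_eq n (X @ ival (Suc k) 1 @ X @ wpow Y k) (ival (Suc (Suc k)) 2 @ X @ X @ wpow Y k)"
  proof -
    have "braid_eq n (X @ ival (Suc k) 1) (map (\<lambda>k. k + 1) (ival (Suc k) 1) @ X)"
      unfolding X_def using Suc assms by (intro shift_word) (auto dest!: set_ival)
    then have sh: "braid_eq n (X @ ival (Suc k) 1) (ival (Suc (Suc k)) 2 @ X)"
      using map_ival_plus[of "Suc k" 1] by (simp add: numeral_2_eq_2)
    show ?thesis using braid_eq_right[OF sh, of "X @ wpow Y k"] vX vW by simp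
  qed
  also have "braid_eq n (ival (Suc (Suc k)) 2 @ X @ X @ wpow Y k) (ival (Suc (Suc k)) 2 @ [1] @ X @ Y @ wpow Y k)"
    using braid_eq_ctx[OF sq[OF assms] v2 vW] by (simp add: X_def Y_def)
  finally have fin: "braid_eq n (X @ wpow X (Suc k)) (ival (Suc (Suc k)) 2 @ [1] @ X @ Y @ wpow Y k)" .
  have eq: "ival (Suc (Suc k)) 2 @ [1] @ xs = ival (Suc (Suc k)) 1 @ xs" for xs
    using ival_Suc_2[of "Suc k"] by (metis append_assoc le_add1 plus_1_eq_Suc)
  show ?case using fin[unfolded eq] by (simp add: wpow_Suc X_def Y_def)
qed

lemma a2:
  assumes "2 \<le> n" "Suc k \<le> n"
  shows "braid_eq n (wpow (ival n 1) (Suc k)) (wpow (ival (n-1) 1) k @ ival n 1 @ ival 1 (Suc k))"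
  using braid_eq_rev[OF a1[OF assms]] by (simp add: rev_wpow rev_ival)



lemma L1r:
  assumes "1 \<le> i" "i + 2 \<le> n"
  shows "braid_eq n (ival n 1 @ [int i + 1]) (int i # ival n 1)"
  using braid_eq.sym[OF braid_eq_rev[OF L1[OF assms]]] by (simp add: rev_ival)

lemma A_comm:
  assumes "1 \<le> i" "i + 2 \<le> n"
  shows "braid_eq n ((ival n 1 @ ival 1 n) @ [int i]) ([int i] @ (ival n 1 @ ival 1 n))"
proof -
  have vn: "valid_word n (ival n 1)" "valid_word n (ival 1 n)" using assms by (auto intro!: valid_ival)
  have "braid_eq n (ival n 1 @ (ival 1 n @ [int i])) (ival n 1 @ ((int i + 1) # ival 1 n))"
    using L1[OF assms] vn by (intro braid_eq_left) auto
  also have "braid_eq n (ival n 1 @ (int i + 1) # ival 1 n) (int i # ival n 1 @ ival 1 n)"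
    using braid_eq_right[OF L1r[OF assms] vn(2)] by simp
  finally show ?thesis by simp
qed

lemma D_lemma: "1 \<le> m \<Longrightarrow> braid_eq m (wpow (ival m 1) m) (wpow (ival 1 m) m)"
proof (induction m)
  case 0 then show ?case by simp
next
  case (Suc m)
  show ?case
  proof (cases "m = 0")
    case True then show ?thesis by (simp add: wpow_Suc ival_def braid_eq.refl)
  next
    case False
    define n where "n = Suc m"
    have n2: "2 \<le> n" using False n_def by simp
    define A where "A = ival n 1 @ ival 1 n"
    define W where "W = wpow (ival 1 m) m"
    have vA: "valid_word n A" using n2 by (auto simp: A_def intro!: valid_ival)
    have vW: "valid_word n W" unfolding W_def using n2 n_def
      by (intro valid_wpow valid_ival) auto
    have "braid_eq n (wpow (ival n 1) (Suc m)) (wpow (ival m 1) m @ A)"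
      using a2[OF n2, of m] n_def by (simp add: A_def)
    also have "braid_eq n (wpow (ival m 1) m @ A) (W @ A)"
      using braid_eq_mono[OF Suc.IH] False n_def vA by (intro braid_eq_right) (auto simp: W_def)
    also have "braid_eq n (W @ A) (A @ W)"
    proof -
      have "braid_eq n (A @ W) (map id W @ A)"
      proof (rule move_word[OF vA])
        fix k assume "k \<in> set W"
        then have "k \<in> set (ival 1 m)" using set_wpow unfolding W_def by blast
        then have "1 \<le> nat k" "nat k + 2 \<le> n" "k = int (nat k)" using n_def False
          by (auto dest!: set_ival)
        then show "braid_eq n (A @ [k]) ([id k] @ A)"
          using A_comm[of "nat k" n] by (simp add: A_def)
      qed
      then show ?thesis by (simp add: braid_eq.sym)
    qed
    also have "braid_eq n (A @ W) (wpow (ival 1 n) (Suc m))"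
      using a1[OF n2, of m] n_def by (simp add: A_def W_def braid_eq.sym)
    finally show ?thesis using n_def by simp
  qed
qed

fun Delta :: "nat \<Rightarrow> bword" where
  "Delta 0 = []"
| "Delta (Suc n) = ival 1 (Suc n) @ Delta n"

lemma Delta_letters: "k \<in> set (Delta n) \<Longrightarrow> 1 \<le> k \<and> k < int n"
  by (induction n) (auto dest!: set_ival)

lemma valid_Delta: "valid_word n (Delta n)"
  using Delta_letters unfolding valid_word_def by fastforce

lemma Delta_comm: "1 \<le> i \<Longrightarrow> i < n \<Longrightarrow> braid_eq n (Delta n @ [int i]) ((int n - int i) # Delta n)"
proof (induction n arbitrary: i)
  case 0 then show ?case by simp
next
  case (Suc n)
  define X where "X = ival 1 (Suc n)"
  have vX: "valid_word (Suc n) X" unfolding X_def by (intro valid_ival) auto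
  have vD: "valid_word (Suc n) (Delta n)" using valid_mono[OF valid_Delta] by simp
  show ?case
  proof (cases "i < n")
    case True
    have "braid_eq (Suc n) (X @ (Delta n @ [int i])) (X @ ((int n - int i) # Delta n))"
      using braid_eq_mono[OF Suc.IH[of i]] True Suc.prems vX by (intro braid_eq_left) auto
    also have "braid_eq (Suc n) (X @ (int n - int i) # Delta n) ((int (n - i) + 1) # X @ Delta n)"
    proof -
      have "braid_eq (Suc n) (X @ [int (n - i)]) ((int (n - i) + 1) # X)"
        using L1[of "n - i" "Suc n"] True Suc.prems by (auto simp: X_def)
      from braid_eq_right[OF this vD] show ?thesis using True by (simp add: of_nat_diff)
    qed
    finally show ?thesis using True by (simp add: X_def algebra_simps)
  next
    case False
    then have i: "i = n" using Suc.prems by simp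
    then obtain p where p: "n = Suc p" using Suc.prems by (cases n) auto
    have n2: "2 \<le> Suc n" using p by simp
    have vDp: "valid_word (Suc n) (Delta p)" using valid_mono[OF valid_Delta, of p "Suc n"] p by simp
    have fw: "braid_eq (Suc n) ([int n] @ Delta p) (Delta p @ [int n])"
      using p by (intro far_word) (auto dest!: Delta_letters)
    have vi: "valid_word (Suc n) (ival 1 n)" using p by (intro valid_ival) auto
    have "braid_eq (Suc n) (X @ ival 1 n @ Delta p @ [int n]) (X @ ival 1 n @ [int n] @ Delta p)"
      using braid_eq_left[OF braid_eq.sym[OF fw], of "X @ ival 1 n"] vX vi by simp
    also have "X @ ival 1 n @ [int n] @ Delta p = X @ X @ Delta p"
      using ival_1_Suc[of n] p by (simp add: X_def)
    also have "braid_eq (Suc n) (X @ X @ Delta p) ([1] @ X @ ival 1 n @ Delta p)"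
      using braid_eq_right[OF sq[OF n2] vDp] by (simp add: X_def)
    finally show ?thesis using i p by (simp add: X_def)
  qed
qed

lemma flip_word:
  assumes "\<forall>k\<in>set w. 1 \<le> k \<and> k < int n"
  shows "braid_eq n (Delta n @ w) (map (\<lambda>k. int n - k) w @ Delta n)"
proof (rule move_word[OF valid_Delta])
  fix k assume "k \<in> set w"
  then have "1 \<le> nat k" "nat k < n" "k = int (nat k)" using assms by auto
  then show "braid_eq n (Delta n @ [k]) ([int n - k] @ Delta n)"
    using Delta_comm[of "nat k" n] by simp
qed

lemma npow_shift:
  assumes "2 \<le> n"
  shows "k < j \<Longrightarrow> j + 1 \<le> n \<Longrightarrow>
    braid_eq n (wpow (ival n 1) k @ [int j]) ((int j - int k) # wpow (ival n 1) k)"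
proof (induction k)
  case 0 then show ?case by (simp add: braid_eq.refl)
next
  case (Suc k)
  have vn: "valid_word n (ival n 1)" using assms by (intro valid_ival) auto
  have vk: "valid_word n (wpow (ival n 1) k)" using vn by (rule valid_wpow)
  have "braid_eq n (ival n 1 @ (wpow (ival n 1) k @ [int j])) (ival n 1 @ ((int j - int k) # wpow (ival n 1) k))"
    using Suc vn by (intro braid_eq_left) auto
  also have "braid_eq n (ival n 1 @ (int j - int k) # wpow (ival n 1) k)
      (int (j - Suc k) # ival n 1 @ wpow (ival n 1) k)"
  proof -
    have "braid_eq n (ival n 1 @ [int (j - Suc k) + 1]) (int (j - Suc k) # ival n 1)"
      using L1r[of "j - Suc k" n] Suc by auto
    from braid_eq_right[OF this vk] show ?thesis using Suc by (simp add: of_nat_diff)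
  qed
  finally show ?case using Suc by (simp add: wpow_Suc of_nat_diff)
qed



lemma markov_refl: "1 \<le> n \<Longrightarrow> valid_word n a \<Longrightarrow> markov_eq n a n a"
  by (simp add: markov_eq.braid braid_eq.refl)

lemma closure_eq: "markov_eq n a m b \<Longrightarrow> closure n a = closure m b"
  unfolding closure_def by (auto intro: markov_eq.trans markov_eq.sym)

lemma markov_rot:
  assumes "1 \<le> n" "valid_word n u" "valid_word n v"
  shows "markov_eq n (u @ v) n (v @ u)"
proof -
  have 1: "markov_eq n (u @ v) n (v @ (u @ v) @ binv v)"
    by (rule markov_eq.sym, rule markov_eq.conj) (use assms in auto)
  have 2: "braid_eq n ((v @ u) @ v @ binv v @ []) ((v @ u) @ [])"
    by (rule braid_eq_cancel_inv) (use assms in auto)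
  have 3: "markov_eq n (v @ (u @ v) @ binv v) n (v @ u)"
    by (rule markov_eq.braid) (use assms 2 in auto)
  show ?thesis by (rule markov_eq.trans[OF 1 3])
qed

lemma conj_braid:
  assumes "1 \<le> n" "valid_word n g" "valid_word n a" "braid_eq n (g @ a @ binv g) b"
  shows "markov_eq n a n b"
  by (rule markov_eq.trans[OF markov_eq.sym[OF markov_eq.conj] markov_eq.braid]) (use assms in auto)

lemma destab: "1 \<le> N \<Longrightarrow> valid_word N a \<Longrightarrow> markov_eq (Suc N) (a @ [int N]) N a"
  by (rule markov_eq.sym, rule markov_eq.stab_pos)

lemma step1:
  assumes "1 \<le> \<rho>" "\<rho> \<le> N" "valid_word N \<gamma>"
  shows "markov_eq (Suc N) (\<gamma> @ wpow (ival 1 (Suc N)) \<rho>) N (\<gamma> @ ival \<rho> 1 @ wpow (ival 1 N) \<rho>)"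
proof -
  obtain r where r: "\<rho> = Suc r" using assms by (cases \<rho>) auto
  have N1: "1 \<le> N" and N2: "2 \<le> Suc N" using assms by auto
  define W where "W = wpow (ival 1 N) r"
  define U where "U = \<gamma> @ ival \<rho> 1 @ ival 1 N"
  have vg: "valid_word (Suc N) \<gamma>" using valid_mono[OF assms(3)] by simp
  have vU: "valid_word N U" using assms by (auto simp: U_def intro!: valid_ival)
  have vW: "valid_word N W" using assms by (auto simp: W_def intro!: valid_ival valid_wpow)
  have vU': "valid_word (Suc N) (U @ [int N])" using valid_mono[OF vU] N1 by auto
  have vW': "valid_word (Suc N) W" using valid_mono[OF vW] by simp
  have a: "braid_eq (Suc N) (wpow (ival 1 (Suc N)) \<rho>) (ival \<rho> 1 @ ival 1 (Suc N) @ W)"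
    using a1[OF N2, of r] r assms by (simp add: W_def)
  have h1: "markov_eq (Suc N) (\<gamma> @ wpow (ival 1 (Suc N)) \<rho>) (Suc N) ((U @ [int N]) @ W)"
    using markov_eq.braid[OF _ braid_eq_left[OF a vg]] ival_1_Suc[OF N1] by (simp add: U_def)
  have h2: "markov_eq (Suc N) ((U @ [int N]) @ W) (Suc N) ((W @ U) @ [int N])"
    using markov_rot[OF _ vU' vW'] by simp
  have h3: "markov_eq (Suc N) ((W @ U) @ [int N]) N (W @ U)"
    using destab[OF N1, of "W @ U"] vU vW by simp
  have h4: "markov_eq N (W @ U) N (\<gamma> @ ival \<rho> 1 @ wpow (ival 1 N) \<rho>)"
    using markov_rot[OF N1 vW vU] r by (simp add: U_def W_def wpow_Suc)
  show ?thesis using markov_eq.trans[OF h1 markov_eq.trans[OF h2 markov_eq.trans[OF h3 h4]]] .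
qed

lemma step2:
  assumes "1 \<le> \<rho>" "\<rho> \<le> N" "valid_word N \<gamma>"
  shows "markov_eq (Suc N) (\<gamma> @ wpow (ival (Suc N) 1) \<rho>) N (ival 1 \<rho> @ \<gamma> @ wpow (ival N 1) \<rho>)"
proof -
  obtain r where r: "\<rho> = Suc r" using assms by (cases \<rho>) auto
  have N1: "1 \<le> N" and N2: "2 \<le> Suc N" using assms by auto
  define V where "V = wpow (ival N 1) r"
  define Z where "Z = ival N 1 @ ival 1 \<rho>"
  have vg: "valid_word (Suc N) \<gamma>" using valid_mono[OF assms(3)] by simp
  have vV: "valid_word N V" using assms by (auto simp: V_def intro!: valid_ival valid_wpow)
  have vZ: "valid_word N Z" using assms by (auto simp: Z_def intro!: valid_ival)
  have vN: "valid_word N (ival N 1)" "valid_word N (ival 1 \<rho>)" using assms by (auto intro!: valid_ival)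
  have a: "braid_eq (Suc N) (wpow (ival (Suc N) 1) \<rho>) (V @ ival (Suc N) 1 @ ival 1 \<rho>)"
    using a2[OF N2, of r] r assms by (simp add: V_def)
  have h1: "markov_eq (Suc N) (\<gamma> @ wpow (ival (Suc N) 1) \<rho>) (Suc N) ((\<gamma> @ V @ [int N]) @ Z)"
    using markov_eq.braid[OF _ braid_eq_left[OF a vg]] ival_Suc_1[OF N1] by (simp add: Z_def)
  have h2: "markov_eq (Suc N) ((\<gamma> @ V @ [int N]) @ Z) (Suc N) ((Z @ \<gamma> @ V) @ [int N])"
    using markov_rot[of "Suc N" "\<gamma> @ V @ [int N]" Z] valid_mono[OF vV, of "Suc N"]
      valid_mono[OF vZ, of "Suc N"] vg N1 by simp
  have h3: "markov_eq (Suc N) ((Z @ \<gamma> @ V) @ [int N]) N (Z @ \<gamma> @ V)"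
    using destab[OF N1, of "Z @ \<gamma> @ V"] vZ vV assms by simp
  have h4: "markov_eq N (ival N 1 @ (ival 1 \<rho> @ \<gamma> @ V)) N ((ival 1 \<rho> @ \<gamma> @ V) @ ival N 1)"
    using markov_rot[OF N1, of "ival N 1" "ival 1 \<rho> @ \<gamma> @ V"] vN vV assms by simp
  have h4': "markov_eq N (Z @ \<gamma> @ V) N (ival 1 \<rho> @ \<gamma> @ wpow (ival N 1) \<rho>)"
    using h4 r by (simp add: Z_def V_def wpow_Suc')
  show ?thesis using markov_eq.trans[OF h1 markov_eq.trans[OF h2 markov_eq.trans[OF h3 h4']]] .
qed

lemma partb1:
  assumes "1 \<le> \<rho>" "\<rho> \<le> m"
  shows "valid_word m \<gamma> \<Longrightarrow> markov_eq (m + x) (\<gamma> @ wpow (ival 1 (m + x)) \<rho>) m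
     (\<gamma> @ wpow (ival \<rho> 1) x @ wpow (ival 1 m) \<rho>)"
proof (induction x arbitrary: \<gamma>)
  case 0 then show ?case using assms
    by (auto intro!: markov_refl valid_wpow valid_ival)
next
  case (Suc x)
  have h1: "markov_eq (Suc (m + x)) (\<gamma> @ wpow (ival 1 (Suc (m + x))) \<rho>) (m + x)
      (\<gamma> @ ival \<rho> 1 @ wpow (ival 1 (m + x)) \<rho>)"
    using step1[of \<rho> "m + x" \<gamma>] assms valid_mono[OF Suc.prems, of "m + x"] by simp
  have vg: "valid_word m (\<gamma> @ ival \<rho> 1)" using Suc.prems assms by (auto intro!: valid_ival)
  have h2: "markov_eq (m + x) (\<gamma> @ ival \<rho> 1 @ wpow (ival 1 (m + x)) \<rho>) m
      (\<gamma> @ ival \<rho> 1 @ wpow (ival \<rho> 1) x @ wpow (ival 1 m) \<rho>)"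
    using Suc.IH[OF vg] by simp
  show ?case using markov_eq.trans[OF h1 h2] by (simp add: wpow_Suc)
qed

lemma partb2:
  assumes "1 \<le> \<rho>" "\<rho> \<le> m"
  shows "valid_word m \<gamma> \<Longrightarrow> markov_eq (m + x) (\<gamma> @ wpow (ival (m + x) 1) \<rho>) m
     (\<gamma> @ wpow (ival m 1) \<rho> @ wpow (ival 1 \<rho>) x)"
proof (induction x arbitrary: \<gamma>)
  case 0 then show ?case using assms
    by (auto intro!: markov_refl valid_wpow valid_ival)
next
  case (Suc x)
  have h1: "markov_eq (Suc (m + x)) (\<gamma> @ wpow (ival (Suc (m + x)) 1) \<rho>) (m + x)
      (ival 1 \<rho> @ \<gamma> @ wpow (ival (m + x) 1) \<rho>)"
    using step2[of \<rho> "m + x" \<gamma>] assms valid_mono[OF Suc.prems, of "m + x"] by simp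
  have vg: "valid_word m (ival 1 \<rho> @ \<gamma>)" using Suc.prems assms by (auto intro!: valid_ival)
  have h2: "markov_eq (m + x) (ival 1 \<rho> @ \<gamma> @ wpow (ival (m + x) 1) \<rho>) m
      (ival 1 \<rho> @ \<gamma> @ wpow (ival m 1) \<rho> @ wpow (ival 1 \<rho>) x)"
    using Suc.IH[OF vg] by simp
  have vr: "valid_word m (\<gamma> @ wpow (ival m 1) \<rho> @ wpow (ival 1 \<rho>) x)"
    using Suc.prems assms by (auto intro!: valid_ival valid_wpow)
  have h3: "markov_eq m (ival 1 \<rho> @ (\<gamma> @ wpow (ival m 1) \<rho> @ wpow (ival 1 \<rho>) x)) m
      ((\<gamma> @ wpow (ival m 1) \<rho> @ wpow (ival 1 \<rho>) x) @ ival 1 \<rho>)"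
    using markov_rot[OF _ _ vr, of "ival 1 \<rho>"] assms valid_ival[of 1 \<rho> m] by auto
  show ?case using markov_eq.trans[OF h1 markov_eq.trans[OF h2]] h3 by (simp add: wpow_Suc')
qed



lemma braid_eq_wpow: "braid_eq n u v \<Longrightarrow> braid_eq n (wpow u k) (wpow v k)"
  by (induction k) (simp_all add: wpow_Suc braid_eq.refl braid_eq_app)

lemma T2: "T_link [(a, b), (c, d)] = closure c (wpow (ival 1 a) b @ wpow (ival 1 c) d)"
  by (simp add: T_link_def)

lemma c1:
  assumes "2 \<le> \<rho>" "\<rho> \<le> m" "m \<le> n" "1 \<le> y"
  shows "T_link [(m, y), (n, \<rho>)] = closure m (wpow (ival \<rho> 1) (n - m) @ wpow (ival 1 m) (\<rho> + y))"
proof -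
  define G where "G = wpow (ival 1 m) y"
  define R where "R = wpow (ival \<rho> 1) (n - m) @ wpow (ival 1 m) \<rho>"
  have vG: "valid_word m G" using assms by (auto simp: G_def intro!: valid_wpow valid_ival)
  have vR: "valid_word m R" using assms by (auto simp: R_def intro!: valid_wpow valid_ival)
  have h1: "markov_eq n (G @ wpow (ival 1 n) \<rho>) m (G @ R)"
    using partb1[of \<rho> m G "n - m"] assms vG by (simp add: R_def)
  have h2: "markov_eq m (G @ R) m (R @ G)" using markov_rot[OF _ vG vR] assms by simp
  have "R @ G = wpow (ival \<rho> 1) (n - m) @ wpow (ival 1 m) (\<rho> + y)"
    by (simp add: R_def G_def wpow_add)
  then show ?thesis using closure_eq[OF markov_eq.trans[OF h1 h2]] by (simp add: T2 G_def)
qed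

lemma c3:
  assumes "2 \<le> m" "m < n" "n mod m = 0" "1 \<le> y"
  shows "T_link [(m, y), (n, m)] = torus_link m (n + y)"
proof -
  obtain q where q: "n = m * q" using assms by auto
  have "T_link [(m, y), (n, m)] = closure m (wpow (ival m 1) (n - m) @ wpow (ival 1 m) (m + y))"
    using c1[of m m n y] assms by simp
  also have "\<dots> = closure m (wpow (ival 1 m) (n - m) @ wpow (ival 1 m) (m + y))"
  proof (rule closure_eq, rule markov_eq.braid)
    show "1 \<le> m" using assms by simp
    have nm: "n - m = m * (q - 1)" using q by (simp add: algebra_simps)
    have "braid_eq m (wpow (wpow (ival m 1) m) (q - 1)) (wpow (wpow (ival 1 m) m) (q - 1))"
      using braid_eq_wpow[OF D_lemma[of m], of "q - 1"] assms by simp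
    then have "braid_eq m (wpow (ival m 1) (n - m)) (wpow (ival 1 m) (n - m))"
      by (simp add: nm wpow_mult)
    then show "braid_eq m (wpow (ival m 1) (n - m) @ wpow (ival 1 m) (m + y))
        (wpow (ival 1 m) (n - m) @ wpow (ival 1 m) (m + y))"
      using assms by (intro braid_eq_right) (auto intro!: valid_wpow valid_ival)
  qed
  also have "\<dots> = closure m (wpow (ival 1 m) (n + y))"
    using assms by (simp add: wpow_add[symmetric])
  finally show ?thesis by (simp add: torus_link_def T_link_def)
qed

lemma c2aux:
  assumes "2 \<le> \<rho>" "\<rho> \<le> n"
  shows "closure n (wpow [1] y @ wpow (ival 1 n) \<rho>) = closure \<rho> (wpow [1] y @ wpow (ival 1 \<rho>) n)"
proof -
  define S1 where "S1 = wpow [1] y"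
  define Sn where "Sn = wpow [int n - 1] y"
  define P where "P = wpow (ival n 1) \<rho>"
  define a where "a = S1 @ wpow (ival 1 n) \<rho>"
  have n1: "1 \<le> n" "2 \<le> n" using assms by auto
  have va: "valid_word n a" using assms
    by (auto simp: a_def S1_def intro!: valid_wpow valid_ival)
  have vS1: "valid_word n S1" "valid_word \<rho> S1" using assms by (auto simp: S1_def intro!: valid_wpow)
  have vSn: "valid_word n Sn" using assms by (auto simp: Sn_def intro!: valid_wpow)
  have vP: "valid_word n P" using assms by (auto simp: P_def intro!: valid_wpow valid_ival)
  \<comment> \<open>(i) flip by Delta\<close>
  have fa: "map (\<lambda>k. int n - k) a = Sn @ P"
    using map_ival_flip[of n] by (simp add: a_def S1_def Sn_def P_def map_wpow)
  have "braid_eq n (Delta n @ a) (map (\<lambda>k. int n - k) a @ Delta n)"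
  proof (rule flip_word, rule ballI)
    fix k assume "k \<in> set a"
    then have "k = 1 \<or> k \<in> set (ival 1 n)" using set_wpow unfolding a_def S1_def by fastforce
    then show "1 \<le> k \<and> k < int n" using assms by (auto dest!: set_ival)
  qed
  then have bb: "braid_eq n (Delta n @ a) (Sn @ P @ Delta n)" using fa by simp
  have "braid_eq n (Delta n @ a @ binv (Delta n)) ((Sn @ P) @ Delta n @ binv (Delta n) @ [])"
    using braid_eq_right[OF bb, of "binv (Delta n)"] valid_Delta[of n] by simp
  also have "braid_eq n ((Sn @ P) @ Delta n @ binv (Delta n) @ []) ((Sn @ P) @ [])"
    using vSn vP valid_Delta by (intro braid_eq_cancel_inv) auto
  finally have "braid_eq n (Delta n @ a @ binv (Delta n)) (Sn @ P)" by simp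
  then have m1: "markov_eq n a n (Sn @ P)"
    using conj_braid[OF n1(1) valid_Delta va] by simp
  define g where "g = wpow (ival n 1) (n - 2)"
  have vg: "valid_word n g" using assms by (auto simp: g_def intro!: valid_wpow valid_ival)
  have gS: "braid_eq n (g @ Sn) (map (\<lambda>_. 1) Sn @ g)"
  proof (rule move_word[OF vg])
    fix k assume "k \<in> set Sn"
    then have k: "k = int (n - 1)" using set_wpow n1 unfolding Sn_def by fastforce
    show "braid_eq n (g @ [k]) ([1] @ g)"
      using npow_shift[OF n1(2), of "n - 2" "n - 1"] n1 k by (simp add: g_def of_nat_diff)
  qed
  have mS: "map (\<lambda>_. 1) Sn = S1" by (simp add: Sn_def S1_def map_wpow)
  have "braid_eq n (g @ (Sn @ P) @ binv g) (S1 @ g @ P @ binv g)"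
    using braid_eq_right[OF gS[unfolded mS], of "P @ binv g"] vP vg by simp
  also have "S1 @ g @ P @ binv g = S1 @ P @ g @ binv g @ []"
    by (simp add: g_def P_def wpow_comm)
  also have "braid_eq n (S1 @ P @ g @ binv g @ []) ((S1 @ P) @ [])"
    using braid_eq_cancel_inv[of n "S1 @ P" g "[]"] vS1 vP vg by simp
  finally have "braid_eq n (g @ (Sn @ P) @ binv g) (S1 @ P)" by simp
  then have m2: "markov_eq n (Sn @ P) n (S1 @ P)"
    using conj_braid[OF n1(1) vg] vSn vP by simp
  have m3: "markov_eq n (S1 @ P) \<rho> (S1 @ wpow (ival \<rho> 1) \<rho> @ wpow (ival 1 \<rho>) (n - \<rho>))"
    using partb2[of \<rho> \<rho> S1 "n - \<rho>"] assms vS1 by (simp add: P_def)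
  \<comment> \<open>(iv) full twist\<close>
  have m4: "markov_eq \<rho> (S1 @ wpow (ival \<rho> 1) \<rho> @ wpow (ival 1 \<rho>) (n - \<rho>)) \<rho>
      (S1 @ wpow (ival 1 \<rho>) \<rho> @ wpow (ival 1 \<rho>) (n - \<rho>))"
    using assms vS1 by (intro markov_eq.braid braid_eq_ctx D_lemma) (auto intro!: valid_wpow valid_ival)
  have e: "S1 @ wpow (ival 1 \<rho>) \<rho> @ wpow (ival 1 \<rho>) (n - \<rho>) = S1 @ wpow (ival 1 \<rho>) n"
    using assms by (simp add: wpow_add[symmetric])
  show ?thesis using closure_eq[OF markov_eq.trans[OF m1 markov_eq.trans[OF m2 markov_eq.trans[OF m3 m4]]]] e
    by (simp add: a_def S1_def)
qed

lemma c2: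
  assumes "2 \<le> \<rho>" "2 \<le> n"
  shows "T_link [(2, y), (n, \<rho>)] = T_link [(2, y), (\<rho>, n)]"
proof -
  have i: "ival (Suc 0) 2 = [1]" by (simp add: ival_def numeral_2_eq_2)
  show ?thesis
  proof (cases "\<rho> \<le> n")
    case True then show ?thesis using c2aux[of \<rho> n y] assms by (simp add: T2 i)
  next
    case False then show ?thesis using c2aux[of n \<rho> y] assms by (simp add: T2 i)
  qed
qed

theorem proposition3p1:
  shows
  "(\<forall>n d. 2 \<le> n \<and> 1 \<le> d \<and> d \<le> n \<longrightarrow>
      braid_eq n (wpow (ival 1 n) d) (ival d 1 @ ival 1 n @ wpow (ival 1 (n - 1)) (d - 1)) \<and>
      braid_eq n (wpow (ival n 1) d) (wpow (ival (n - 1) 1) (d - 1) @ ival n 1 @ ival 1 d))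
   \<and> (\<forall>\<rho> m x \<gamma>. 1 \<le> \<rho> \<and> \<rho> \<le> m \<and> 2 \<le> m + x \<and> valid_word m \<gamma> \<longrightarrow>
      closure (m + x) (\<gamma> @ wpow (ival 1 (m + x)) \<rho>)
        = closure m (\<gamma> @ wpow (ival \<rho> 1) x @ wpow (ival 1 m) \<rho>) \<and>
      closure (m + x) (\<gamma> @ wpow (ival (m + x) 1) \<rho>)
        = closure m (\<gamma> @ wpow (ival m 1) \<rho> @ wpow (ival 1 \<rho>) x))
   \<and> (\<forall>m y n \<rho>. 2 \<le> \<rho> \<and> \<rho> \<le> m \<and> m \<le> n \<and> 1 \<le> y \<longrightarrow>
      T_link [(m, y), (n, \<rho>)] = closure m (wpow (ival \<rho> 1) (n - m) @ wpow (ival 1 m) (\<rho> + y)))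
   \<and> (\<forall>y n \<rho>. 2 \<le> \<rho> \<and> 2 \<le> n \<and> 1 \<le> y \<longrightarrow>
      T_link [(2, y), (n, \<rho>)] = T_link [(2, y), (\<rho>, n)])
   \<and> (\<forall>m n y. 2 \<le> m \<and> m < n \<and> n mod m = 0 \<and> 1 \<le> y \<longrightarrow>
      T_link [(m, y), (n, m)] = torus_link m (n + y))"
proof (intro conjI allI impI)
  fix n d :: nat assume h: "2 \<le> n \<and> 1 \<le> d \<and> d \<le> n"
  then obtain k where k: "d = Suc k" by (cases d) auto
  show "braid_eq n (wpow (ival 1 n) d) (ival d 1 @ ival 1 n @ wpow (ival 1 (n - 1)) (d - 1))"
    using a1[of n k] h k by simp
  show "braid_eq n (wpow (ival n 1) d) (wpow (ival (n - 1) 1) (d - 1) @ ival n 1 @ ival 1 d)"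
    using a2[of n k] h k by simp
next
  fix \<rho> m x \<gamma> assume h: "1 \<le> \<rho> \<and> \<rho> \<le> m \<and> 2 \<le> m + x \<and> valid_word m \<gamma>"
  show "closure (m + x) (\<gamma> @ wpow (ival 1 (m + x)) \<rho>)
        = closure m (\<gamma> @ wpow (ival \<rho> 1) x @ wpow (ival 1 m) \<rho>)"
    using closure_eq[OF partb1[of \<rho> m \<gamma> x]] h by simp
  show "closure (m + x) (\<gamma> @ wpow (ival (m + x) 1) \<rho>)
        = closure m (\<gamma> @ wpow (ival m 1) \<rho> @ wpow (ival 1 \<rho>) x)"
    using closure_eq[OF partb2[of \<rho> m \<gamma> x]] h by simp
next
  fix m y n \<rho> :: nat assume "2 \<le> \<rho> \<and> \<rho> \<le> m \<and> m \<le> n \<and> 1 \<le> y"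
  then show "T_link [(m, y), (n, \<rho>)] = closure m (wpow (ival \<rho> 1) (n - m) @ wpow (ival 1 m) (\<rho> + y))"
    using c1 by simp
next
  fix y n \<rho> :: nat assume "2 \<le> \<rho> \<and> 2 \<le> n \<and> 1 \<le> y"
  then show "T_link [(2, y), (n, \<rho>)] = T_link [(2, y), (\<rho>, n)]" using c2 by simp
next
  fix m n y :: nat assume "2 \<le> m \<and> m < n \<and> n mod m = 0 \<and> 1 \<le> y"
  then show "T_link [(m, y), (n, m)] = torus_link m (n + y)" using c3 by simp
qed


end
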